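(* Let $(G,k)$ be an instance of \textsc{Bicolored $P_3$ Deletion} and let $u,v,w,z_1,z_2$ be vertices such that $G[\{u,v,w,z_1,z_2\}]$ is a CC-Hourglass (with the vertex labels as in the definition). Then $(G,k)$ is a yes-instance if and only if at least one of $(G-\{v,w\},k-1)$, $(G-\{\{u,v\},\{v,z_1\}\},k-2)$, $(G-\{\{u,v\},\{u,z_1\},\{v,z_2\}\},k-3)$ is a yes-instance.
   Context: A two-colored graph $G=(V,E_r,E_b)$ is a finite simple undirected graph whose edge set $E=E_r\uplus E_b$ is partitioned into red and blue edges; $G-F$ removes the edges in $F$ (and $G-\{v,w\}$ removes the single edge $\{v,w\}$). A bicolored $P_3$ is an induced subgraph on three vertices $a,b,c$ with edges $\{a,b\},\{b,c\}$ of different colors and $\{a,c\}\notin E$. A CC-Hourglass on $u,v,w,z_1,z_2$ is an induced subgraph whose edges are exactly $\{u,v\}$ blue, $\{v,w\}$ red, $\{u,z_1\}$ blue, $\{v,z_1\}$ red, $\{v,z_2\}$ blue, $\{w,z_2\}$ red, or the same with the two colors swapped. \textsc{Bicolored $P_3$ Deletion}: given $G$ and an integer $k$, decide whether some $S\subseteq E$ with $|S|\le k$ makes $G-S$ free of induced bicolored $P_3$s (no-instance if $k<0$). *)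

theory Defs
  imports Main
begin

definition two_colored_graph :: "'a set \<Rightarrow> 'a set set \<Rightarrow> 'a set set \<Rightarrow> bool" where
  "two_colored_graph V Er Eb \<longleftrightarrow> finite V \<and> Er \<inter> Eb = {} \<and>
     (\<forall>e \<in> Er \<union> Eb. \<exists>x y. x \<in> V \<and> y \<in> V \<and> x \<noteq> y \<and> e = {x, y})"

definition bicolored_P3 :: "'a set \<Rightarrow> 'a set set \<Rightarrow> 'a set set \<Rightarrow> 'a \<Rightarrow> 'a \<Rightarrow> 'a \<Rightarrow> bool" where
  "bicolored_P3 V Er Eb a b c \<longleftrightarrow> a \<in> V \<and> b \<in> V \<and> c \<in> V \<and>
     a \<noteq> b \<and> b \<noteq> c \<and> a \<noteq> c \<and>
     (({a, b} \<in> Er \<and> {b, c} \<in> Eb) \<or> ({a, b} \<in> Eb \<and> {b, c} \<in> Er)) \<and>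
     {a, c} \<notin> Er \<union> Eb"

definition P3_free :: "'a set \<Rightarrow> 'a set set \<Rightarrow> 'a set set \<Rightarrow> bool" where
  "P3_free V Er Eb \<longleftrightarrow> \<not> (\<exists>a b c. bicolored_P3 V Er Eb a b c)"

definition yes_instance :: "'a set \<Rightarrow> 'a set set \<Rightarrow> 'a set set \<Rightarrow> int \<Rightarrow> bool" where
  "yes_instance V Er Eb k \<longleftrightarrow> k \<ge> 0 \<and>
     (\<exists>S. S \<subseteq> Er \<union> Eb \<and> int (card S) \<le> k \<and> P3_free V (Er - S) (Eb - S))"

definition hourglass_pattern ::
  "'a set set \<Rightarrow> 'a set set \<Rightarrow> 'a \<Rightarrow> 'a \<Rightarrow> 'a \<Rightarrow> 'a \<Rightarrow> 'a \<Rightarrow> bool" where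
  "hourglass_pattern R B u v w z1 z2 \<longleftrightarrow>
     {u, v} \<in> B \<and> {v, w} \<in> R \<and> {u, z1} \<in> B \<and> {v, z1} \<in> R \<and>
     {v, z2} \<in> B \<and> {w, z2} \<in> R \<and>
     {u, w} \<notin> R \<union> B \<and> {u, z2} \<notin> R \<union> B \<and> {w, z1} \<notin> R \<union> B \<and> {z1, z2} \<notin> R \<union> B"

definition cc_hourglass ::
  "'a set \<Rightarrow> 'a set set \<Rightarrow> 'a set set \<Rightarrow> 'a \<Rightarrow> 'a \<Rightarrow> 'a \<Rightarrow> 'a \<Rightarrow> 'a \<Rightarrow> bool" where
  "cc_hourglass V Er Eb u v w z1 z2 \<longleftrightarrow>
     {u, v, w, z1, z2} \<subseteq> V \<and> distinct [u, v, w, z1, z2] \<and>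
     (hourglass_pattern Er Eb u v w z1 z2 \<or> hourglass_pattern Eb Er u v w z1 z2)"

end

theory Submission
  imports Defs
begin

lemma P3_swap: "bicolored_P3 V R B a b c = bicolored_P3 V B R a b c"
  unfolding bicolored_P3_def by blast

lemma yes_swap: "yes_instance V R B k = yes_instance V B R k"
  unfolding yes_instance_def P3_free_def
  by (simp add: P3_swap Un_commute)

lemma back_lem:
  assumes "D \<subseteq> Er \<union> Eb" "yes_instance V (Er - D) (Eb - D) (k - int (card D))"
  shows "yes_instance V Er Eb k"
proof -
  obtain S where S: "S \<subseteq> (Er - D) \<union> (Eb - D)" "int (card S) \<le> k - int (card D)"
    "P3_free V (Er - D - S) (Eb - D - S)" and k: "k - int (card D) \<ge> 0"
    using assms(2) unfolding yes_instance_def by blast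
  have "card (S \<union> D) \<le> card S + card D" by (rule card_Un_le)
  moreover have "Er - (S \<union> D) = Er - D - S" "Eb - (S \<union> D) = Eb - D - S" by auto
  ultimately show ?thesis unfolding yes_instance_def using S k assms(1)
    by (intro conjI exI[of _ "S \<union> D"]) auto
qed

lemma fwd:
  assumes "finite S" "D \<subseteq> S" "S \<subseteq> Er \<union> Eb" "int (card S) \<le> k" "P3_free V (Er - S) (Eb - S)"
  shows "yes_instance V (Er - D) (Eb - D) (k - int (card D))"
proof -
  have c: "card (S - D) = card S - card D" using assms(1,2) by (simp add: card_Diff_subset finite_subset)
  have "card D \<le> card S" using assms(1,2) by (simp add: card_mono)
  moreover have "Er - D - (S - D) = Er - S" "Eb - D - (S - D) = Eb - S" using assms(2) by auto
  ultimately show ?thesis unfolding yes_instance_def using assms c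
    by (intro conjI exI[of _ "S - D"]) auto
qed

lemma core:
  assumes "hourglass_pattern Er Eb u v w z1 z2" "{u, v, w, z1, z2} \<subseteq> V"
    "distinct [u, v, w, z1, z2]" "P3_free V (Er - S) (Eb - S)"
  shows "{v,w} \<in> S \<or> ({u,v} \<in> S \<and> {v,z1} \<in> S) \<or> ({u,v} \<in> S \<and> {u,z1} \<in> S \<and> {v,z2} \<in> S)"
proof (rule ccontr)
  assume n: "\<not> ?thesis"
  have h1: "\<not> bicolored_P3 V (Er - S) (Eb - S) u v w"
    "\<not> bicolored_P3 V (Er - S) (Eb - S) z1 v z2"
    "\<not> bicolored_P3 V (Er - S) (Eb - S) u z1 v"
    using assms(4) unfolding P3_free_def by blast+
  have p: "{u, v} \<in> Eb" "{v, w} \<in> Er" "{u, z1} \<in> Eb" "{v, z1} \<in> Er"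
     "{v, z2} \<in> Eb" "{u, w} \<notin> Er \<union> Eb" "{z1, z2} \<notin> Er \<union> Eb"
    using assms(1) unfolding hourglass_pattern_def by blast+
  have vs: "u \<in> V" "v \<in> V" "w \<in> V" "z1 \<in> V" "z2 \<in> V" using assms(2) by auto
  have ds: "u \<noteq> v" "v \<noteq> w" "u \<noteq> w" "z1 \<noteq> v" "v \<noteq> z2" "z1 \<noteq> z2" "u \<noteq> z1"
    using assms(3) by auto
  have e: "{u,v} \<in> S \<or> {v,w} \<in> S"
  proof (rule ccontr)
    assume "\<not> ?thesis"
    then have "bicolored_P3 V (Er - S) (Eb - S) u v w"
      unfolding bicolored_P3_def using p vs ds by blast
    then show False using h1 by blast
  qed
  have f: "{v,z1} \<in> S \<or> {v,z2} \<in> S"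
  proof (rule ccontr)
    assume "\<not> ?thesis"
    moreover have "{z1, v} = {v, z1}" by (rule insert_commute)
    ultimately have "bicolored_P3 V (Er - S) (Eb - S) z1 v z2"
      unfolding bicolored_P3_def using p vs ds by simp
    then show False using h1 by blast
  qed
  have g: "{u,v} \<in> S \<longrightarrow> {v,z1} \<in> S \<or> {u,z1} \<in> S"
  proof (rule ccontr)
    assume "\<not> ?thesis"
    moreover have "{z1, v} = {v, z1}" by (rule insert_commute)
    ultimately have "bicolored_P3 V (Er - S) (Eb - S) u z1 v"
      unfolding bicolored_P3_def using p vs ds by simp
    then show False using h1 by blast
  qed
  show False using n e f g by blast
qed

lemma main:
  assumes "two_colored_graph V Er Eb" "hourglass_pattern Er Eb u v w z1 z2"
    "{u, v, w, z1, z2} \<subseteq> V" "distinct [u, v, w, z1, z2]"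
  shows "yes_instance V Er Eb k \<longleftrightarrow>
           (yes_instance V (Er - {{v, w}}) (Eb - {{v, w}}) (k - 1) \<or>
            yes_instance V (Er - {{u, v}, {v, z1}}) (Eb - {{u, v}, {v, z1}}) (k - 2) \<or>
            yes_instance V (Er - {{u, v}, {u, z1}, {v, z2}}) (Eb - {{u, v}, {u, z1}, {v, z2}}) (k - 3))"
proof -
  have fin: "finite (Er \<union> Eb)"
  proof (rule finite_subset)
    show "Er \<union> Eb \<subseteq> Pow V"
    proof
      fix e assume "e \<in> Er \<union> Eb"
      then obtain x y where "x \<in> V" "y \<in> V" "e = {x, y}"
        using assms(1) unfolding two_colored_graph_def by meson
      then show "e \<in> Pow V" by simp
    qed
    show "finite (Pow V)" using assms(1) unfolding two_colored_graph_def by simp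
  qed
  have c1: "card {{v, w}} = 1" by simp
  have c2: "card {{u, v}, {v, z1}} = 2" using assms(4) by (auto simp: doubleton_eq_iff)
  have c3: "card {{u, v}, {u, z1}, {v, z2}} = 3" using assms(4) by (auto simp: doubleton_eq_iff)
  have s1: "{{v, w}} \<subseteq> Er \<union> Eb" and s2: "{{u, v}, {v, z1}} \<subseteq> Er \<union> Eb"
    and s3: "{{u, v}, {u, z1}, {v, z2}} \<subseteq> Er \<union> Eb"
    using assms(2) unfolding hourglass_pattern_def by auto
  show ?thesis (is "?L \<longleftrightarrow> ?R")
  proof
    assume "yes_instance V Er Eb k"
    then obtain S where S: "S \<subseteq> Er \<union> Eb" "int (card S) \<le> k" "P3_free V (Er - S) (Eb - S)"
      unfolding yes_instance_def by blast
    have fS: "finite S" using S(1) fin finite_subset by blast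
    from core[OF assms(2,3,4) S(3)] show ?R
    proof (elim disjE conjE)
      assume "{v,w} \<in> S"
      then show ?R using fwd[OF fS _ S, of "{{v,w}}"] c1 by simp
    next
      assume "{u,v} \<in> S" "{v,z1} \<in> S"
      then show ?R using fwd[OF fS _ S, of "{{u, v}, {v, z1}}"] c2 by simp
    next
      assume "{u,v} \<in> S" "{u,z1} \<in> S" "{v,z2} \<in> S"
      then show ?R using fwd[OF fS _ S, of "{{u, v}, {u, z1}, {v, z2}}"] c3 by simp
    qed
  next
    assume ?R
    then show "yes_instance V Er Eb k"
    proof (elim disjE)
      assume "yes_instance V (Er - {{v, w}}) (Eb - {{v, w}}) (k - 1)"
      then show ?thesis using back_lem[OF s1, of V k] c1 by simp
    next
      assume "yes_instance V (Er - {{u, v}, {v, z1}}) (Eb - {{u, v}, {v, z1}}) (k - 2)"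
      then show ?thesis using back_lem[OF s2, of V k] c2 by simp
    next
      assume "yes_instance V (Er - {{u, v}, {u, z1}, {v, z2}}) (Eb - {{u, v}, {u, z1}, {v, z2}}) (k - 3)"
      then show ?thesis using back_lem[OF s3, of V k] c3 by simp
    qed
  qed
qed

theorem lemma7:
  fixes V :: "'a set" and Er Eb :: "'a set set" and k :: int
    and u v w z1 z2 :: 'a
  assumes "two_colored_graph V Er Eb"
    and "cc_hourglass V Er Eb u v w z1 z2"
  shows "yes_instance V Er Eb k \<longleftrightarrow>
           (yes_instance V (Er - {{v, w}}) (Eb - {{v, w}}) (k - 1) \<or>
            yes_instance V (Er - {{u, v}, {v, z1}}) (Eb - {{u, v}, {v, z1}}) (k - 2) \<or>
            yes_instance V (Er - {{u, v}, {u, z1}, {v, z2}}) (Eb - {{u, v}, {u, z1}, {v, z2}}) (k - 3))"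
proof -
  have d: "{u, v, w, z1, z2} \<subseteq> V" "distinct [u, v, w, z1, z2]"
    and hp: "hourglass_pattern Er Eb u v w z1 z2 \<or> hourglass_pattern Eb Er u v w z1 z2"
    using assms(2) unfolding cc_hourglass_def by blast+
  from hp show ?thesis
  proof
    assume "hourglass_pattern Er Eb u v w z1 z2"
    then show ?thesis using main[OF assms(1) _ d] by blast
  next
    assume h: "hourglass_pattern Eb Er u v w z1 z2"
    have t: "two_colored_graph V Eb Er" using assms(1) unfolding two_colored_graph_def by blast
    show ?thesis using main[OF t h d, of k] by (simp add: yes_swap)
  qed
qed

end
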